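(* Let $\Sigma$ be a finite simplicial complex, let $d\ge0$, and assume $\deg\tau>0$ for all $\tau\in\Sigma_d$. Then $d+2$ is an eigenvalue of the normalized up-Laplacian $\Delta^{up}_d$ if and only if the signed graph $(\Gamma_d,\tilde s)$ has an antibalanced connected component. Moreover, the multiplicity of the eigenvalue $d+2$ equals the number of antibalanced connected components of $(\Gamma_d,\tilde s)$.
   Context: $\Sigma_d$ consists of the $d$-simplices of $\Sigma$ with fixed orientations. $\mathrm{sgn}([\tau],\partial[\sigma])\in\{\pm1\}$ is the coefficient of $[\tau]$ in the simplicial boundary $\partial[\sigma]$ of the oriented $(d+1)$-simplex $\sigma\supset\tau$. $\deg\tau$ is the number of $(d+1)$-simplices containing $\tau$. $\Delta^{up}_d=D^{-1}B_{d+1}B_{d+1}^\top$, where $B_{d+1}$ is the signed $\Sigma_d\times\Sigma_{d+1}$ incidence matrix and $D=\mathrm{diag}(\deg\tau)$; all its eigenvalues lie in $[0,d+2]$. $\Gamma_d$ is the graph on $\Sigma_d$ in which distinct $\tau,\tau'$ are adjacent iff both are facets of some (necessarily unique) $\sigma\in\Sigma_{d+1}$. The sign is $\tilde s(\tau,\tau')=-\mathrm{sgn}([\tau],\partial[\sigma])\,\mathrm{sgn}([\tau'],\partial[\sigma])$. Switching at a vertex means multiplying the signs of all edges at that vertex by $-1$. A signed graph (or a connected component of one) is balanced if after some switchings all edge signs are $+1$, and antibalanced if after some switchings all edge signs are $-1$. *)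

theory Defs
  imports "Jordan_Normal_Form.Char_Poly"
begin

definition simplicial_complex :: "'a set set \<Rightarrow> bool" where
  "simplicial_complex \<Sigma> \<longleftrightarrow> finite \<Sigma> \<and>
     (\<forall>\<sigma>\<in>\<Sigma>. finite \<sigma> \<and> \<sigma> \<noteq> {}) \<and>
     (\<forall>\<sigma>\<in>\<Sigma>. \<forall>\<tau>. \<tau> \<subseteq> \<sigma> \<and> \<tau> \<noteq> {} \<longrightarrow> \<tau> \<in> \<Sigma>)"

definition simplices :: "'a set set \<Rightarrow> nat \<Rightarrow> 'a set set" where
  "simplices \<Sigma> d = {\<sigma> \<in> \<Sigma>. card \<sigma> = d + 1}"

text \<open>An orientation assigns to each simplex a sign in {1,-1}: the oriented simplex
  [\<sigma>] is \<open>ori \<sigma>\<close> times the simplex oriented by increasing vertex order.\<close>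
definition orientation :: "('a set \<Rightarrow> real) \<Rightarrow> bool" where
  "orientation ori \<longleftrightarrow> (\<forall>\<sigma>. ori \<sigma> = 1 \<or> ori \<sigma> = -1)"

text \<open>Coefficient of [\<tau>] in the simplicial boundary of [\<sigma>], for a facet \<tau> of \<sigma>;
  for [v_0,...,v_k] in increasing order, \<partial> = \<Sum> (-1)^i [.. without v_i ..].\<close>
definition bsgn :: "('a::linorder set \<Rightarrow> real) \<Rightarrow> 'a set \<Rightarrow> 'a set \<Rightarrow> real" where
  "bsgn ori \<tau> \<sigma> = ori \<sigma> * ori \<tau> *
     (-1) ^ card {u \<in> \<sigma>. u < (THE v. v \<in> \<sigma> \<and> \<tau> = \<sigma> - {v})}"

definition incidence :: "'a set set \<Rightarrow> nat \<Rightarrow> ('a::linorder set \<Rightarrow> real) \<Rightarrow> 'a set \<Rightarrow> 'a set \<Rightarrow> real" where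
  "incidence \<Sigma> d ori \<tau> \<sigma> =
     (if \<tau> \<in> simplices \<Sigma> d \<and> \<sigma> \<in> simplices \<Sigma> (d+1) \<and> \<tau> \<subseteq> \<sigma> then bsgn ori \<tau> \<sigma> else 0)"

definition deg :: "'a set set \<Rightarrow> nat \<Rightarrow> 'a set \<Rightarrow> nat" where
  "deg \<Sigma> d \<tau> = card {\<sigma> \<in> simplices \<Sigma> (d+1). \<tau> \<subseteq> \<sigma>}"

text \<open>A fixed enumeration of \<Sigma>_d used to index matrices (the spectrum does not depend on it).\<close>
definition simplex_list :: "'a set set \<Rightarrow> nat \<Rightarrow> 'a set list" where
  "simplex_list \<Sigma> d = (SOME xs. distinct xs \<and> set xs = simplices \<Sigma> d)"

definition up_laplacian :: "'a set set \<Rightarrow> nat \<Rightarrow> ('a::linorder set \<Rightarrow> real) \<Rightarrow> real mat" where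
  "up_laplacian \<Sigma> d ori =
     (let xs = simplex_list \<Sigma> d; n = length xs in
      mat n n (\<lambda>(i, j). (1 / real (deg \<Sigma> d (xs ! i))) *
        (\<Sum>\<sigma>\<in>simplices \<Sigma> (d+1). incidence \<Sigma> d ori (xs ! i) \<sigma> * incidence \<Sigma> d ori (xs ! j) \<sigma>)))"

definition gamma_adj :: "'a set set \<Rightarrow> nat \<Rightarrow> 'a set \<Rightarrow> 'a set \<Rightarrow> bool" where
  "gamma_adj \<Sigma> d \<tau> \<tau>' \<longleftrightarrow> \<tau> \<in> simplices \<Sigma> d \<and> \<tau>' \<in> simplices \<Sigma> d \<and> \<tau> \<noteq> \<tau>' \<and>
     (\<exists>\<sigma>\<in>simplices \<Sigma> (d+1). \<tau> \<subseteq> \<sigma> \<and> \<tau>' \<subseteq> \<sigma>)"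

text \<open>Edge sign; the unique common coface is \<tau> \<union> \<tau>'.\<close>
definition gamma_sign :: "('a::linorder set \<Rightarrow> real) \<Rightarrow> 'a set \<Rightarrow> 'a set \<Rightarrow> real" where
  "gamma_sign ori \<tau> \<tau>' = - bsgn ori \<tau> (\<tau> \<union> \<tau>') * bsgn ori \<tau>' (\<tau> \<union> \<tau>')"

definition gamma_components :: "'a set set \<Rightarrow> nat \<Rightarrow> 'a set set set" where
  "gamma_components \<Sigma> d =
     simplices \<Sigma> d // {(x, y). x \<in> simplices \<Sigma> d \<and> y \<in> simplices \<Sigma> d \<and>
                              (x, y) \<in> {(u, v). gamma_adj \<Sigma> d u v}\<^sup>*}"

definition antibalanced :: "'a set set \<Rightarrow> nat \<Rightarrow> ('a::linorder set \<Rightarrow> real) \<Rightarrow> 'a set set \<Rightarrow> bool" where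
  "antibalanced \<Sigma> d ori C \<longleftrightarrow>
     (\<exists>\<theta>. (\<forall>x\<in>C. \<theta> x = 1 \<or> \<theta> x = -1) \<and>
          (\<forall>x\<in>C. \<forall>y\<in>C. gamma_adj \<Sigma> d x y \<longrightarrow> \<theta> x * gamma_sign ori x y * \<theta> y = -1))"

end

theory Submission
  imports Defs "Jordan_Normal_Form.Jordan_Normal_Form_Existence" "Jordan_Normal_Form.Jordan_Normal_Form_Uniqueness"
begin

hide_const (open) Coset.order

lemma mv_idx:
  assumes "B \<in> carrier_mat n m" "v \<in> carrier_vec m" "i < n"
  shows "(B *\<^sub>v v) $ i = (\<Sum>j<m. B $$ (i,j) * v $ j)"
  using assms by (auto simp: scalar_prod_def row_def lessThan_atLeast0 intro!: sum.cong)

lemma sym_real_eigen: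
  fixes A :: "real mat"
  assumes A: "A \<in> carrier_mat n n" and w: "\<And>i. i<n \<Longrightarrow> w i > 0"
    and sym: "\<And>i j. i<n \<Longrightarrow> j<n \<Longrightarrow> w i * A$$(i,j) = w j * A$$(j,i)"
    and ev: "eigenvector (map_mat complex_of_real A) v b"
  shows "Im b = 0"
proof -
  have v: "v \<in> carrier_vec n" and v0: "v \<noteq> 0\<^sub>v n" and eq: "map_mat complex_of_real A *\<^sub>v v = b \<cdot>\<^sub>v v"
    using ev A unfolding eigenvector_def by auto
  have comp: "(\<Sum>j<n. complex_of_real (A$$(i,j)) * v$j) = b * v$i" if "i<n" for i
  proof -
    have "(map_mat complex_of_real A *\<^sub>v v) $ i = (b \<cdot>\<^sub>v v) $ i" using eq by simp
    thus ?thesis using mv_idx[of "map_mat complex_of_real A" n n v i] A v that by auto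
  qed
  define S where "S = (\<Sum>i<n. \<Sum>j<n. complex_of_real (w i * A$$(i,j)) * cnj (v$i) * v$j)"
  have "cnj S = (\<Sum>i<n. \<Sum>j<n. complex_of_real (w i * A$$(i,j)) * v$i * cnj (v$j))"
    unfolding S_def by (simp add: mult.commute)
  also have "\<dots> = (\<Sum>j<n. \<Sum>i<n. complex_of_real (w i * A$$(i,j)) * v$i * cnj (v$j))"
    by (rule sum.swap)
  also have "\<dots> = S" unfolding S_def
    by (intro sum.cong refl, subst sym, auto simp: mult_ac)
  finally have SR: "Im S = 0" by (metis Reals_cnj_iff complex_is_Real_iff)
  define r where "r = (\<Sum>i<n. w i * (cmod (v$i))^2)"
  have "S = (\<Sum>i<n. complex_of_real (w i) * cnj (v$i) * (\<Sum>j<n. complex_of_real (A$$(i,j)) * v$j))"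
    unfolding S_def by (simp add: sum_distrib_left mult_ac)
  also have "\<dots> = (\<Sum>i<n. complex_of_real (w i) * cnj (v$i) * (b * v$i))"
    by (intro sum.cong refl, simp add: comp)
  also have "\<dots> = b * complex_of_real r"
    unfolding r_def by (simp add: sum_distrib_left mult_ac complex_mult_cnj cmod_power2)
  finally have Sb: "S = b * complex_of_real r" .
  obtain k where k: "k < n" "v $ k \<noteq> 0" using v v0 by (metis carrier_vecD eq_vecI index_zero_vec(1) index_zero_vec(2))
  have "r \<ge> w k * (cmod (v$k))^2" unfolding r_def
    using k w by (intro member_le_sum) (auto simp: less_imp_le)
  moreover have "w k * (cmod (v$k))^2 > 0" using k w by auto
  ultimately have "r > 0" by linarith
  with SR Sb show ?thesis by simp
qed


lemma sym_real_split:
  fixes A :: "real mat"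
  assumes A: "A \<in> carrier_mat n n" and w: "\<And>i. i<n \<Longrightarrow> w i > 0"
    and sym: "\<And>i j. i<n \<Longrightarrow> j<n \<Longrightarrow> w i * A$$(i,j) = w j * A$$(j,i)"
  shows "\<exists>as. char_poly A = (\<Prod>a\<leftarrow>as. [:-a,1:])"
proof -
  interpret rp: map_poly_comm_ring_hom "complex_of_real" ..
  let ?Ac = "map_mat complex_of_real A"
  have Ac: "?Ac \<in> carrier_mat n n" using A by auto
  have cp: "char_poly ?Ac = map_poly complex_of_real (char_poly A)"
    by (rule of_real_hom.char_poly_hom[OF A])
  obtain bs where bs: "char_poly ?Ac = (\<Prod>b\<leftarrow>bs. [:-b,1:])"
    using char_poly_factorized[OF Ac] by auto
  have real: "Im b = 0" if b: "b \<in> set bs" for b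
  proof -
    have "poly (char_poly ?Ac) b = 0" unfolding bs using b
      by (induct bs) auto
    then have "eigenvalue ?Ac b" using eigenvalue_root_char_poly[OF Ac] by simp
    then obtain v where "eigenvector ?Ac v b" unfolding eigenvalue_def by auto
    from sym_real_eigen[OF A w sym this] show ?thesis by auto
  qed
  have "(\<Prod>b\<leftarrow>bs. [:-b,1:]) = map_poly complex_of_real (\<Prod>b\<leftarrow>bs. [:-Re b,1:])"
    using real
  proof (induct bs)
    case Nil thus ?case by simp
  next
    case (Cons b bs)
    have "complex_of_real (Re b) = b" using Cons(2) by (simp add: complex_eq_iff)
    hence e1: "[:-b,1:] = map_poly complex_of_real [:-Re b,1:]" by simp
    have IH: "(\<Prod>b\<leftarrow>bs. [:-b,1:]) = map_poly complex_of_real (\<Prod>b\<leftarrow>bs. [:-Re b,1:])"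
      using Cons by auto
    show ?case by (simp only: list.map prod_list.Cons e1 IH rp.hom_mult[symmetric])
  qed
  with cp bs have eq: "map_poly complex_of_real (char_poly A) = map_poly complex_of_real (\<Prod>b\<leftarrow>bs. [:-Re b,1:])"
    by simp
  have "char_poly A = (\<Prod>b\<leftarrow>bs. [:-Re b,1:])"
  proof (rule poly_eqI)
    fix i
    have "coeff (map_poly complex_of_real (char_poly A)) i = coeff (map_poly complex_of_real (\<Prod>b\<leftarrow>bs. [:-Re b,1:])) i"
      using eq by simp
    thus "coeff (char_poly A) i = coeff (\<Prod>b\<leftarrow>bs. [:-Re b,1:]) i" by (simp add: coeff_map_poly)
  qed
  also have "\<dots> = (\<Prod>a\<leftarrow>map Re bs. [:-a,1:])" by (simp add: o_def)
  finally show ?thesis by blast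
qed


lemma mult_mat_zero_vec': "A \<in> carrier_mat n m \<Longrightarrow> A *\<^sub>v 0\<^sub>v m = 0\<^sub>v n"
  by (intro eq_vecI) (auto simp: scalar_prod_def)

lemma sym_ker2:
  fixes C :: "real mat"
  assumes C: "C \<in> carrier_mat n n" and w: "\<And>i. i<n \<Longrightarrow> w i > 0"
    and sym: "\<And>i j. i<n \<Longrightarrow> j<n \<Longrightarrow> w i * C$$(i,j) = w j * C$$(j,i)"
    and v: "v \<in> carrier_vec n" and z: "C *\<^sub>v (C *\<^sub>v v) = 0\<^sub>v n"
  shows "C *\<^sub>v v = 0\<^sub>v n"
proof -
  define u where "u = C *\<^sub>v v"
  have u: "u \<in> carrier_vec n" using C v u_def by auto
  have ui: "u $ i = (\<Sum>j<n. C$$(i,j) * v$j)" if "i<n" for i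
    unfolding u_def using mv_idx[OF C v that] .
  have cu: "(\<Sum>i<n. C$$(j,i) * u$i) = 0" if "j<n" for j
  proof -
    have "(C *\<^sub>v u) $ j = 0" using z that unfolding u_def by simp
    thus ?thesis using mv_idx[OF C u that] by simp
  qed
  have "(\<Sum>i<n. w i * u$i * u$i) = (\<Sum>i<n. \<Sum>j<n. w i * u$i * (C$$(i,j) * v$j))"
    by (intro sum.cong refl, simp add: ui sum_distrib_left)
  also have "\<dots> = (\<Sum>j<n. \<Sum>i<n. w i * u$i * (C$$(i,j) * v$j))" by (rule sum.swap)
  also have "\<dots> = (\<Sum>j<n. w j * v$j * (\<Sum>i<n. C$$(j,i) * u$i))"
  proof (intro sum.cong refl)
    fix j assume j: "j \<in> {..<n}"
    show "(\<Sum>i<n. w i * u$i * (C$$(i,j) * v$j)) = w j * v$j * (\<Sum>i<n. C$$(j,i) * u$i)"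
      unfolding sum_distrib_left
    proof (intro sum.cong refl)
      fix i assume i: "i \<in> {..<n}"
      have "w i * u$i * (C$$(i,j) * v$j) = (w i * C$$(i,j)) * u$i * v$j" by (simp add: mult_ac)
      also have "\<dots> = (w j * C$$(j,i)) * u$i * v$j" using sym i j by simp
      finally show "w i * u$i * (C$$(i,j) * v$j) = w j * v$j * (C$$(j,i) * u$i)" by (simp add: mult_ac)
    qed
  qed
  also have "\<dots> = 0" by (simp add: cu)
  finally have s0: "(\<Sum>i<n. w i * u$i * u$i) = 0" .
  have "\<forall>i\<in>{..<n}. w i * u$i * u$i = 0"
    using s0 by (subst sum_nonneg_eq_0_iff[symmetric]) (auto intro!: sum_nonneg simp: w less_imp_le mult.assoc)
  hence "u$i = 0" if "i<n" for i proof - have "w i * u$i * u$i = 0" using \<open>\<forall>i\<in>{..<n}. w i * u$i * u$i = 0\<close> that by blast thus ?thesis using w[OF that] by simp qed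
  thus ?thesis unfolding u_def[symmetric] using u by (intro eq_vecI) auto
qed

lemma sum_list_ge_eq:
  fixes f g :: "'b \<Rightarrow> nat"
  assumes "sum_list (map f xs) = sum_list (map g xs)" "\<And>x. f x \<ge> g x"
  shows "\<forall>x\<in>set xs. f x = g x"
  using assms
proof (induct xs)
  case (Cons a xs)
  have "sum_list (map f xs) \<ge> sum_list (map g xs)"
    by (induct xs) (auto intro: add_mono Cons(3))
  with Cons(2) Cons(3)[of a] have "f a = g a" "sum_list (map f xs) = sum_list (map g xs)" by auto
  with Cons show ?case by auto
qed simp

lemma sym_order_kernel:
  fixes A :: "real mat"
  assumes A: "A \<in> carrier_mat n n" and w: "\<And>i. i<n \<Longrightarrow> w i > 0"
    and sym: "\<And>i j. i<n \<Longrightarrow> j<n \<Longrightarrow> w i * A$$(i,j) = w j * A$$(j,i)"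
  shows "order lam (char_poly A) = kernel_dim (char_matrix A lam)"
proof -
  obtain as where "char_poly A = (\<Prod>a\<leftarrow>as. [:-a,1:])" using sym_real_split[OF A w sym] by auto
  from jordan_nf_exists[OF A this] obtain n_as where jnf: "jordan_nf A n_as" by auto
  let ?C = "char_matrix A lam"
  have C: "?C \<in> carrier_mat n n" using A by simp
  have Cij: "?C $$ (i,j) = A $$ (i,j) - (if i = j then lam else 0)" if "i<n" "j<n" for i j
    using A that unfolding char_matrix_def by auto
  have symC: "w i * ?C$$(i,j) = w j * ?C$$(j,i)" if "i<n" "j<n" for i j
    using sym[OF that] that by (auto simp: Cij right_diff_distrib)
  have C1: "?C ^\<^sub>m 1 = ?C" using C by simp
  have C2: "?C ^\<^sub>m 2 = ?C * ?C" using C by (simp add: numeral_2_eq_2)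
  have ker: "mat_kernel (?C ^\<^sub>m 2) = mat_kernel ?C"
  proof
    show "mat_kernel (?C ^\<^sub>m 2) \<subseteq> mat_kernel ?C"
    proof
      fix v assume "v \<in> mat_kernel (?C ^\<^sub>m 2)"
      hence v: "v \<in> carrier_vec n" and z: "(?C * ?C) *\<^sub>v v = 0\<^sub>v n"
        unfolding C2 using C by (auto simp: mat_kernel_def)
      have "?C *\<^sub>v (?C *\<^sub>v v) = 0\<^sub>v n" using z C v by (simp add: assoc_mult_mat_vec)
      from sym_ker2[OF C w symC v this] show "v \<in> mat_kernel ?C"
        using v C by (auto simp: mat_kernel_def)
    qed
    show "mat_kernel ?C \<subseteq> mat_kernel (?C ^\<^sub>m 2)"
    proof
      fix v assume "v \<in> mat_kernel ?C"
      hence v: "v \<in> carrier_vec n" and z: "?C *\<^sub>v v = 0\<^sub>v n"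
        using C by (auto simp: mat_kernel_def)
      have "(?C * ?C) *\<^sub>v v = 0\<^sub>v n" using z C v mult_mat_zero_vec'[OF C] by (simp add: assoc_mult_mat_vec)
      thus "v \<in> mat_kernel (?C ^\<^sub>m 2)" unfolding C2 using v C by (auto simp: mat_kernel_def)
    qed
  qed
  have "kernel_dim (?C ^\<^sub>m 2) = kernel_dim ?C"
    unfolding kernel_dim_def using ker C by simp
  hence "dim_gen_eigenspace A lam 2 = dim_gen_eigenspace A lam 1"
    unfolding dim_gen_eigenspace_def C1 .
  hence eq: "(\<Sum> n \<leftarrow> map fst [(n, e)\<leftarrow>n_as . e = lam]. min 2 n) = (\<Sum> n \<leftarrow> map fst [(n, e)\<leftarrow>n_as . e = lam]. min 1 n)"
    unfolding dim_gen_eigenspace[OF jnf] .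
  have all: "\<forall>x\<in>set (map fst [(n, e)\<leftarrow>n_as . e = lam]). min 2 x = min 1 x"
    by (rule sum_list_ge_eq[OF eq]) auto
  have fl: "filter (\<lambda>na. snd na = lam) n_as = [(n, e)\<leftarrow>n_as . e = lam]"
    by (induct n_as) auto
  have "order lam (char_poly A) = (\<Sum> n \<leftarrow> map fst [(n, e)\<leftarrow>n_as . e = lam]. n)"
    unfolding jordan_nf_order[OF jnf] fl by simp
  also have "\<dots> = (\<Sum> n \<leftarrow> map fst [(n, e)\<leftarrow>n_as . e = lam]. min 1 n)"
    using all by (intro arg_cong[where f = sum_list] map_cong refl) (metis min_def nat_le_linear numeral_le_one_iff semiring_norm(69) order.trans)
  also have "\<dots> = dim_gen_eigenspace A lam 1" unfolding dim_gen_eigenspace[OF jnf] ..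
  also have "\<dots> = kernel_dim ?C" unfolding dim_gen_eigenspace_def C1 ..
  finally show ?thesis .
qed


context
  fixes \<Sigma> :: "'a::linorder set set" and d :: nat and ori :: "'a set \<Rightarrow> real"
  assumes SC: "simplicial_complex \<Sigma>" and OR: "orientation ori"
    and DP: "\<forall>\<tau>\<in>simplices \<Sigma> d. deg \<Sigma> d \<tau> > 0"
begin

lemma finS: "finite (simplices \<Sigma> k)"
  using SC unfolding simplicial_complex_def simplices_def by auto

lemma fin_simplex: "\<sigma> \<in> simplices \<Sigma> k \<Longrightarrow> finite \<sigma>"
  using SC unfolding simplicial_complex_def simplices_def by auto

lemma card_simplex: "\<sigma> \<in> simplices \<Sigma> k \<Longrightarrow> card \<sigma> = k + 1"
  unfolding simplices_def by auto

lemma bsgn_pm: "bsgn ori \<tau> \<sigma> = 1 \<or> bsgn ori \<tau> \<sigma> = -1"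
proof -
  have a: "ori \<sigma> = 1 \<or> ori \<sigma> = -1" "ori \<tau> = 1 \<or> ori \<tau> = -1" using OR unfolding orientation_def by auto
  have b: "((-1::real) ^ k = 1) \<or> ((-1::real) ^ k = -1)" for k
    by (metis neg_one_even_power neg_one_odd_power)
  show ?thesis unfolding bsgn_def using a b[of "card {u \<in> \<sigma>. u < (THE v. v \<in> \<sigma> \<and> \<tau> = \<sigma> - {v})}"]
    by auto
qed

lemma bsgn_sq: "bsgn ori \<tau> \<sigma> * bsgn ori \<tau> \<sigma> = 1"
  using bsgn_pm[of \<tau> \<sigma>] by auto

lemma facets_eq:
  assumes "\<sigma> \<in> simplices \<Sigma> (d+1)"
  shows "{\<tau> \<in> simplices \<Sigma> d. \<tau> \<subseteq> \<sigma>} = {\<tau>. \<tau> \<subseteq> \<sigma> \<and> card \<tau> = d+1}"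
proof -
  have s: "\<sigma> \<in> \<Sigma>" using assms unfolding simplices_def by auto
  have "\<tau> \<in> \<Sigma>" if "\<tau> \<subseteq> \<sigma>" "card \<tau> = d+1" for \<tau>
  proof -
    have "\<tau> \<noteq> {}" using that(2) by auto
    thus ?thesis using SC s that(1) unfolding simplicial_complex_def by blast
  qed
  thus ?thesis unfolding simplices_def by auto
qed

lemma card_facets:
  assumes "\<sigma> \<in> simplices \<Sigma> (d+1)"
  shows "card {\<tau> \<in> simplices \<Sigma> d. \<tau> \<subseteq> \<sigma>} = d+2"
  unfolding facets_eq[OF assms] n_subsets[OF fin_simplex[OF assms]] card_simplex[OF assms]
  by simp

lemma union_facets:
  assumes s: "\<sigma> \<in> simplices \<Sigma> (d+1)" and t: "\<tau> \<in> simplices \<Sigma> d" "\<tau>' \<in> simplices \<Sigma> d"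
    and sub: "\<tau> \<subseteq> \<sigma>" "\<tau>' \<subseteq> \<sigma>" and ne: "\<tau> \<noteq> \<tau>'"
  shows "\<tau> \<union> \<tau>' = \<sigma>"
proof -
  have fs: "finite \<sigma>" using fin_simplex[OF s] .
  have ct: "card \<tau> = d+1" "card \<tau>' = d+1" using t card_simplex by auto
  have cs: "card \<sigma> = d+2" using card_simplex[OF s] by simp
  have "\<not> \<tau>' \<subseteq> \<tau>"
  proof
    assume "\<tau>' \<subseteq> \<tau>"
    moreover have "finite \<tau>" using sub fs finite_subset by auto
    ultimately have "\<tau>' = \<tau>" using ct card_subset_eq by metis
    with ne show False by simp
  qed
  hence "\<tau> \<subset> \<tau> \<union> \<tau>'" by auto
  hence "card \<tau> < card (\<tau> \<union> \<tau>')" using fs sub by (intro psubset_card_mono) (auto intro: finite_subset)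
  moreover have "card (\<tau> \<union> \<tau>') \<le> card \<sigma>" using fs sub by (intro card_mono) auto
  ultimately have "card (\<tau> \<union> \<tau>') = card \<sigma>" using ct cs by linarith
  thus ?thesis using fs sub card_subset_eq[of \<sigma> "\<tau> \<union> \<tau>'"] by auto
qed

definition "xs = simplex_list \<Sigma> d"

lemma xs: "distinct xs" "set xs = simplices \<Sigma> d"
proof -
  have "\<exists>ys. distinct ys \<and> set ys = simplices \<Sigma> d" using finite_distinct_list[OF finS] by metis
  from someI_ex[OF this] show "distinct xs" "set xs = simplices \<Sigma> d"
    unfolding xs_def simplex_list_def by auto
qed

end

lemma lagrange:
  fixes k :: "'b \<Rightarrow> real"
  assumes "finite F"
  shows "(\<Sum>a\<in>F. \<Sum>b\<in>F. (k a - k b)^2) = 2 * real (card F) * (\<Sum>a\<in>F. (k a)^2) - 2 * (\<Sum>a\<in>F. k a)^2"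
proof -
  define Q where "Q = (\<Sum>b\<in>F. (k b)^2)"
  define K where "K = (\<Sum>b\<in>F. k b)"
  have "(\<Sum>a\<in>F. \<Sum>b\<in>F. (k a - k b)^2) = (\<Sum>a\<in>F. \<Sum>b\<in>F. ((k a)^2 + (k b)^2 - 2 * k a * k b))"
    by (rule sum.cong[OF refl], rule sum.cong[OF refl]) (simp add: power2_diff)
  also have "\<dots> = (\<Sum>a\<in>F. real (card F) * (k a)^2 + Q - 2 * k a * K)"
    unfolding Q_def K_def by (rule sum.cong[OF refl]) (simp add: sum.distrib sum_subtractf sum_distrib_left)
  also have "\<dots> = real (card F) * Q + real (card F) * Q - 2 * K * K"
    unfolding sum_subtractf sum.distrib by (simp add: sum_distrib_left[symmetric] sum_distrib_right[symmetric] Q_def K_def)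
  also have "\<dots> = 2 * real (card F) * Q - 2 * K^2"
    by (simp add: power2_eq_square)
  finally show ?thesis unfolding Q_def K_def .
qed

context
  fixes \<Sigma> :: "'a::linorder set set" and d :: nat and ori :: "'a set \<Rightarrow> real"
  assumes SC: "simplicial_complex \<Sigma>" and OR: "orientation ori"
    and DP: "\<forall>\<tau>\<in>simplices \<Sigma> d. deg \<Sigma> d \<tau> > 0"
begin

abbreviation "S \<equiv> simplices \<Sigma> d"
abbreviation "T \<equiv> simplices \<Sigma> (Suc d)"
abbreviation "b \<equiv> bsgn ori"
abbreviation "inc \<equiv> incidence \<Sigma> d ori"

lemmas fS = finS[OF SC OR DP]
lemmas bsq = bsgn_sq[OF SC OR DP]
lemmas bpm = bsgn_pm[OF SC OR DP]
lemmas cfac = card_facets[OF SC OR DP, simplified]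
lemmas ufac = union_facets[OF SC OR DP, simplified]
lemmas fsx = fin_simplex[OF SC OR DP]
lemmas csx = card_simplex[OF SC OR DP]

definition G where "G f \<sigma> = (\<Sum>\<tau>\<in>S. inc \<tau> \<sigma> * f \<tau>)"

definition cons where "cons f \<longleftrightarrow> (\<forall>\<sigma>\<in>T. \<forall>\<tau>\<in>S. \<forall>\<tau>'\<in>S. \<tau> \<subseteq> \<sigma> \<longrightarrow> \<tau>' \<subseteq> \<sigma> \<longrightarrow> b \<tau> \<sigma> * f \<tau> = b \<tau>' \<sigma> * f \<tau>')"

definition Kf where "Kf f \<longleftrightarrow> (\<forall>\<tau>\<in>S. (\<Sum>\<sigma>\<in>T. inc \<tau> \<sigma> * G f \<sigma>) = (real d + 2) * real (deg \<Sigma> d \<tau>) * f \<tau>)"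

lemma inc_simp: "\<tau> \<in> S \<Longrightarrow> \<sigma> \<in> T \<Longrightarrow> inc \<tau> \<sigma> = (if \<tau> \<subseteq> \<sigma> then b \<tau> \<sigma> else 0)"
  unfolding incidence_def by auto

lemma G_facets: "\<sigma> \<in> T \<Longrightarrow> G f \<sigma> = (\<Sum>\<tau>\<in>{\<tau>\<in>S. \<tau> \<subseteq> \<sigma>}. b \<tau> \<sigma> * f \<tau>)"
  unfolding G_def using fS by (simp add: sum.inter_filter inc_simp) (intro sum.cong refl, auto)

lemma deg_sum: "\<tau> \<in> S \<Longrightarrow> (\<Sum>\<sigma>\<in>T. (inc \<tau> \<sigma>)^2) = real (deg \<Sigma> d \<tau>)"
proof -
  assume t: "\<tau> \<in> S"
  have "(\<Sum>\<sigma>\<in>T. (inc \<tau> \<sigma>)^2) = (\<Sum>\<sigma>\<in>T. if \<tau> \<subseteq> \<sigma> then 1 else 0)"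
    using t by (intro sum.cong refl) (auto simp: inc_simp power2_eq_square bsq)
  also have "\<dots> = real (card {\<sigma>\<in>T. \<tau> \<subseteq> \<sigma>})"
    using fS by (simp add: sum.inter_filter[symmetric])
  finally show ?thesis unfolding deg_def by simp
qed

lemma cons_Kf: "cons f \<Longrightarrow> Kf f"
  unfolding Kf_def
proof
  assume c: "cons f"
  fix \<tau> assume t: "\<tau> \<in> S"
  have Gs: "G f \<sigma> = (real d + 2) * (b \<tau> \<sigma> * f \<tau>)" if s: "\<sigma> \<in> T" and ts: "\<tau> \<subseteq> \<sigma>" for \<sigma>
  proof -
    have "G f \<sigma> = (\<Sum>\<tau>'\<in>{\<tau>\<in>S. \<tau> \<subseteq> \<sigma>}. b \<tau> \<sigma> * f \<tau>)"
      unfolding G_facets[OF s]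
    proof (rule sum.cong[OF refl])
      fix \<tau>' assume "\<tau>' \<in> {\<tau>\<in>S. \<tau> \<subseteq> \<sigma>}"
      thus "b \<tau>' \<sigma> * f \<tau>' = b \<tau> \<sigma> * f \<tau>" using c s t ts unfolding cons_def by blast
    qed
    also have "\<dots> = (real d + 2) * (b \<tau> \<sigma> * f \<tau>)" using cfac[OF s] by simp
    finally show ?thesis .
  qed
  have "(\<Sum>\<sigma>\<in>T. inc \<tau> \<sigma> * G f \<sigma>) = (\<Sum>\<sigma>\<in>T. (real d + 2) * f \<tau> * (inc \<tau> \<sigma>)^2)"
  proof (rule sum.cong[OF refl])
    fix \<sigma> assume s: "\<sigma> \<in> T"
    show "inc \<tau> \<sigma> * G f \<sigma> = (real d + 2) * f \<tau> * (inc \<tau> \<sigma>)^2"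
    proof (cases "\<tau> \<subseteq> \<sigma>")
      case True
      have "inc \<tau> \<sigma> * G f \<sigma> = (real d + 2) * f \<tau> * (b \<tau> \<sigma> * b \<tau> \<sigma>)"
        using t s True by (simp add: inc_simp Gs)
      thus ?thesis using t s True by (simp add: inc_simp power2_eq_square bsq)
    qed (use t s in \<open>simp add: inc_simp\<close>)
  qed
  also have "\<dots> = (real d + 2) * f \<tau> * (\<Sum>\<sigma>\<in>T. (inc \<tau> \<sigma>)^2)"
    by (simp only: sum_distrib_left)
  also have "\<dots> = (real d + 2) * real (deg \<Sigma> d \<tau>) * f \<tau>"
    unfolding deg_sum[OF t] by simp
  finally show "(\<Sum>\<sigma>\<in>T. inc \<tau> \<sigma> * G f \<sigma>) = (real d + 2) * real (deg \<Sigma> d \<tau>) * f \<tau>" .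
qed

lemma Kf_cons: "Kf f \<Longrightarrow> cons f"
proof -
  assume K: "Kf f"
  let ?l = "real d + 2"
  let ?F = "\<lambda>\<sigma>. {\<tau>\<in>S. \<tau> \<subseteq> \<sigma>}"
  let ?h = "\<lambda>\<sigma> \<tau>. b \<tau> \<sigma> * f \<tau>"
  let ?P = "\<lambda>\<sigma>. (\<Sum>x\<in>?F \<sigma>. \<Sum>y\<in>?F \<sigma>. (?h \<sigma> x - ?h \<sigma> y)^2)"
  have K': "(\<Sum>\<sigma>\<in>T. inc \<tau> \<sigma> * G f \<sigma>) = ?l * real (deg \<Sigma> d \<tau>) * f \<tau>" if "\<tau> \<in> S" for \<tau>
    using K that unfolding Kf_def by blast
  have e1: "(\<Sum>\<sigma>\<in>T. (G f \<sigma>)^2) = ?l * (\<Sum>\<tau>\<in>S. real (deg \<Sigma> d \<tau>) * (f \<tau>)^2)"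
  proof -
    have "(\<Sum>\<sigma>\<in>T. (G f \<sigma>)^2) = (\<Sum>\<sigma>\<in>T. \<Sum>\<tau>\<in>S. G f \<sigma> * (inc \<tau> \<sigma> * f \<tau>))"
      by (simp add: power2_eq_square sum_distrib_left G_def[of f])
    also have "\<dots> = (\<Sum>\<tau>\<in>S. \<Sum>\<sigma>\<in>T. G f \<sigma> * (inc \<tau> \<sigma> * f \<tau>))" by (rule sum.swap)
    also have "\<dots> = (\<Sum>\<tau>\<in>S. f \<tau> * (\<Sum>\<sigma>\<in>T. inc \<tau> \<sigma> * G f \<sigma>))"
      by (simp add: sum_distrib_left mult_ac)
    also have "\<dots> = (\<Sum>\<tau>\<in>S. ?l * (real (deg \<Sigma> d \<tau>) * (f \<tau>)^2))"
    proof (rule sum.cong[OF refl])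
      fix \<tau> assume t: "\<tau> \<in> S"
      show "f \<tau> * (\<Sum>\<sigma>\<in>T. inc \<tau> \<sigma> * G f \<sigma>) = ?l * (real (deg \<Sigma> d \<tau>) * (f \<tau>)^2)"
        unfolding K'[OF t] by (simp add: power2_eq_square mult_ac)
    qed
    finally show ?thesis by (simp add: sum_distrib_left)
  qed
  have e2: "(\<Sum>\<tau>\<in>S. real (deg \<Sigma> d \<tau>) * (f \<tau>)^2) = (\<Sum>\<sigma>\<in>T. \<Sum>\<tau>\<in>?F \<sigma>. (?h \<sigma> \<tau>)^2)"
  proof -
    have "(\<Sum>\<tau>\<in>S. real (deg \<Sigma> d \<tau>) * (f \<tau>)^2) = (\<Sum>\<tau>\<in>S. \<Sum>\<sigma>\<in>T. (inc \<tau> \<sigma>)^2 * (f \<tau>)^2)"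
    proof (rule sum.cong[OF refl])
      fix \<tau> assume t: "\<tau> \<in> S"
      show "real (deg \<Sigma> d \<tau>) * (f \<tau>)^2 = (\<Sum>\<sigma>\<in>T. (inc \<tau> \<sigma>)^2 * (f \<tau>)^2)"
        unfolding deg_sum[OF t, symmetric] sum_distrib_right ..
    qed
    also have "\<dots> = (\<Sum>\<sigma>\<in>T. \<Sum>\<tau>\<in>S. (inc \<tau> \<sigma>)^2 * (f \<tau>)^2)" by (rule sum.swap)
    also have "\<dots> = (\<Sum>\<sigma>\<in>T. \<Sum>\<tau>\<in>?F \<sigma>. (?h \<sigma> \<tau>)^2)"
    proof (rule sum.cong[OF refl])
      fix \<sigma> assume s: "\<sigma> \<in> T"
      have "(\<Sum>\<tau>\<in>S. (inc \<tau> \<sigma>)^2 * (f \<tau>)^2) = (\<Sum>\<tau>\<in>S. if \<tau> \<subseteq> \<sigma> then (?h \<sigma> \<tau>)^2 else 0)"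
        using s by (intro sum.cong refl) (simp add: inc_simp power_mult_distrib)
      also have "\<dots> = (\<Sum>\<tau>\<in>?F \<sigma>. (?h \<sigma> \<tau>)^2)" using fS by (simp add: sum.inter_filter)
      finally show "(\<Sum>\<tau>\<in>S. (inc \<tau> \<sigma>)^2 * (f \<tau>)^2) = (\<Sum>\<tau>\<in>?F \<sigma>. (?h \<sigma> \<tau>)^2)" .
    qed
    finally show ?thesis .
  qed
  have e3: "?P \<sigma> = 2 * ?l * (\<Sum>\<tau>\<in>?F \<sigma>. (?h \<sigma> \<tau>)^2) - 2 * (G f \<sigma>)^2" if s: "\<sigma> \<in> T" for \<sigma>
  proof -
    have fin: "finite (?F \<sigma>)" using fS by auto
    have "real (card (?F \<sigma>)) = ?l" using cfac[OF s] by simp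
    thus ?thesis using lagrange[OF fin, of "?h \<sigma>"] G_facets[OF s, of f] by simp
  qed
  have "(\<Sum>\<sigma>\<in>T. ?P \<sigma>) = (\<Sum>\<sigma>\<in>T. 2 * ?l * (\<Sum>\<tau>\<in>?F \<sigma>. (?h \<sigma> \<tau>)^2) - 2 * (G f \<sigma>)^2)"
    by (intro sum.cong refl) (rule e3)
  also have "\<dots> = 2 * ?l * (\<Sum>\<sigma>\<in>T. \<Sum>\<tau>\<in>?F \<sigma>. (?h \<sigma> \<tau>)^2) - 2 * (\<Sum>\<sigma>\<in>T. (G f \<sigma>)^2)"
    by (simp add: sum_subtractf sum_distrib_left)
  also have "\<dots> = 0" unfolding e1 e2[symmetric] by simp
  finally have P0: "(\<Sum>\<sigma>\<in>T. ?P \<sigma>) = 0" .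
  have Pnn: "\<forall>\<sigma>\<in>T. 0 \<le> ?P \<sigma>" by (auto intro!: sum_nonneg)
  have "((\<Sum>\<sigma>\<in>T. ?P \<sigma>) = 0) = (\<forall>\<sigma>\<in>T. ?P \<sigma> = 0)"
    by (rule sum_nonneg_eq_0_iff[OF fS[of "Suc d"]]) (use Pnn in blast)
  hence Pz: "?P \<sigma> = 0" if "\<sigma> \<in> T" for \<sigma>
    using P0 that by simp
  show "cons f" unfolding cons_def
  proof (intro ballI impI)
    fix \<sigma> \<tau> \<tau>' assume s: "\<sigma> \<in> T" and t: "\<tau> \<in> S" "\<tau>' \<in> S" and sub: "\<tau> \<subseteq> \<sigma>" "\<tau>' \<subseteq> \<sigma>"
    have fin: "finite (?F \<sigma>)" using fS by auto
    have inner: "\<forall>x\<in>?F \<sigma>. (\<Sum>y\<in>?F \<sigma>. (?h \<sigma> x - ?h \<sigma> y)^2) = 0"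
    proof -
      have eqn: "(?P \<sigma> = 0) = (\<forall>x\<in>?F \<sigma>. (\<Sum>y\<in>?F \<sigma>. (?h \<sigma> x - ?h \<sigma> y)^2) = 0)"
        by (rule sum_nonneg_eq_0_iff[OF fin]) (rule sum_nonneg, simp)
      show ?thesis by (rule iffD1[OF eqn Pz[OF s]])
    qed
    have tF: "\<tau> \<in> ?F \<sigma>" "\<tau>' \<in> ?F \<sigma>" using t sub by auto
    have "(\<Sum>y\<in>?F \<sigma>. (?h \<sigma> \<tau> - ?h \<sigma> y)^2) = 0" by (rule bspec[OF inner tF(1)])
    moreover have "((\<Sum>y\<in>?F \<sigma>. (?h \<sigma> \<tau> - ?h \<sigma> y)^2) = 0) = (\<forall>y\<in>?F \<sigma>. (?h \<sigma> \<tau> - ?h \<sigma> y)^2 = 0)"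
      by (rule sum_nonneg_eq_0_iff[OF fin]) simp
    ultimately have "\<forall>y\<in>?F \<sigma>. (?h \<sigma> \<tau> - ?h \<sigma> y)^2 = 0" by (simp only:)
    hence "(?h \<sigma> \<tau> - ?h \<sigma> \<tau>')^2 = 0" by (rule bspec[OF _ tF(2)])
    thus "b \<tau> \<sigma> * f \<tau> = b \<tau>' \<sigma> * f \<tau>'" by (simp only: power_eq_0_iff right_minus_eq)
  qed
qed

end

context
  fixes \<Sigma> :: "'a::linorder set set" and d :: nat and ori :: "'a set \<Rightarrow> real"
  assumes SC: "simplicial_complex \<Sigma>" and OR: "orientation ori"
    and DP: "\<forall>\<tau>\<in>simplices \<Sigma> d. deg \<Sigma> d \<tau> > 0"
begin

abbreviation "SD \<equiv> simplices \<Sigma> d"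
abbreviation "TD \<equiv> simplices \<Sigma> (Suc d)"
abbreviation "bs \<equiv> bsgn ori"
abbreviation "adj \<equiv> gamma_adj \<Sigma> d"
abbreviation "gs \<equiv> gamma_sign ori"
abbreviation "E \<equiv> {(u, v). gamma_adj \<Sigma> d u v}"

lemmas bsq6 = bsgn_sq[OF SC OR DP]
lemmas bpm6 = bsgn_pm[OF SC OR DP]
lemmas ufac6 = union_facets[OF SC OR DP, simplified]

lemmas consD = cons_def[OF SC OR DP]

definition Pg where "Pg f \<longleftrightarrow> (\<forall>\<tau> \<tau>'. adj \<tau> \<tau>' \<longrightarrow> f \<tau> = - gs \<tau> \<tau>' * f \<tau>')"

lemma adj_sym: "adj x y \<Longrightarrow> adj y x"
  unfolding gamma_adj_def by auto

lemma gs_sym: "gs x y = gs y x"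
  unfolding gamma_sign_def by (simp add: Un_commute mult.commute)

lemma gs_sq: "gs x y * gs x y = 1"
proof -
  have "gs x y * gs x y = (bs x (x \<union> y) * bs x (x \<union> y)) * (bs y (x \<union> y) * bs y (x \<union> y))"
    unfolding gamma_sign_def by (simp add: mult_ac)
  thus ?thesis by (simp add: bsq6)
qed

lemma gs_pm: "gs x y = 1 \<or> gs x y = -1"
  unfolding gamma_sign_def using bpm6[of x "x \<union> y"] bpm6[of y "x \<union> y"] by auto

lemma gs_abs: "\<bar>gs x y\<bar> = 1"
  using gs_pm[of x y] by auto

lemma cons_Pg: "cons \<Sigma> d ori f \<longleftrightarrow> Pg f"
proof
  assume c: "cons \<Sigma> d ori f"
  show "Pg f" unfolding Pg_def
  proof (intro allI impI)
    fix x y assume a: "adj x y"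
    then obtain \<sigma> where s: "\<sigma> \<in> TD" and xy: "x \<in> SD" "y \<in> SD" "x \<noteq> y" "x \<subseteq> \<sigma>" "y \<subseteq> \<sigma>"
      unfolding gamma_adj_def by auto
    have u: "x \<union> y = \<sigma>" using ufac6[OF s xy(1,2,4,5,3)] .
    have e: "bs x \<sigma> * f x = bs y \<sigma> * f y" using c s xy unfolding consD by blast
    have "- gs x y * f y = bs x \<sigma> * (bs y \<sigma> * f y)" unfolding gamma_sign_def u by (simp add: mult_ac)
    also have "\<dots> = bs x \<sigma> * bs x \<sigma> * f x" unfolding e[symmetric] by (simp add: mult_ac)
    finally show "f x = - gs x y * f y" by (simp add: bsq6)
  qed
next
  assume p: "Pg f"
  show "cons \<Sigma> d ori f" unfolding consD
  proof (intro ballI impI)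
    fix \<sigma> x y assume s: "\<sigma> \<in> TD" and xy: "x \<in> SD" "y \<in> SD" "x \<subseteq> \<sigma>" "y \<subseteq> \<sigma>"
    show "bs x \<sigma> * f x = bs y \<sigma> * f y"
    proof (cases "x = y")
      case False
      have a: "adj x y" unfolding gamma_adj_def using s xy False by auto
      have u: "x \<union> y = \<sigma>" using ufac6[OF s xy False] .
      have "f x = - gs x y * f y" using p a unfolding Pg_def by blast
      hence "bs x \<sigma> * f x = (bs x \<sigma> * bs x \<sigma>) * bs y \<sigma> * f y" unfolding gamma_sign_def u by (simp add: mult_ac)
      thus ?thesis by (simp add: bsq6)
    qed simp
  qed
qed

lemma adjS: "adj x y \<Longrightarrow> x \<in> SD \<and> y \<in> SD"
  unfolding gamma_adj_def by auto

lemma rtr_S: "(x, y) \<in> E\<^sup>* \<Longrightarrow> x \<in> SD \<Longrightarrow> y \<in> SD"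
  by (induct rule: rtrancl_induct) (auto dest: adjS)

lemma rtr_sym: "(x, y) \<in> E\<^sup>* \<Longrightarrow> (y, x) \<in> E\<^sup>*"
proof -
  have "sym E" unfolding sym_def using adj_sym by auto
  hence "sym (E\<^sup>*)" by (rule sym_rtrancl)
  thus "(x, y) \<in> E\<^sup>* \<Longrightarrow> (y, x) \<in> E\<^sup>*" unfolding sym_def by blast
qed

definition gcomp where "gcomp x = {y\<in>SD. (x, y) \<in> E\<^sup>*}"

lemma gcomps_eq: "gamma_components \<Sigma> d = gcomp ` SD"
proof -
  let ?R = "{(x, y). x \<in> SD \<and> y \<in> SD \<and> (x, y) \<in> E\<^sup>*}"
  have "?R``{x} = gcomp x" if "x \<in> SD" for x using that unfolding gcomp_def Image_def by blast
  hence "(\<Union>x\<in>SD. {?R``{x}}) = (\<Union>x\<in>SD. {gcomp x})" by (intro SUP_cong refl) simp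
  thus ?thesis unfolding gamma_components_def quotient_def by blast
qed

lemma gcomp_self: "x \<in> SD \<Longrightarrow> x \<in> gcomp x"
  unfolding gcomp_def by auto

lemma gcomp_eq: "y \<in> gcomp x \<Longrightarrow> gcomp y = gcomp x"
proof -
  assume "y \<in> gcomp x"
  hence xy: "(x, y) \<in> E\<^sup>*" unfolding gcomp_def by simp
  have yx: "(y, x) \<in> E\<^sup>*" by (rule rtr_sym[OF xy])
  show ?thesis
  proof (rule equalityI; rule subsetI)
    fix z assume "z \<in> gcomp y"
    hence "z \<in> SD" "(y, z) \<in> E\<^sup>*" unfolding gcomp_def by simp_all
    thus "z \<in> gcomp x" using rtrancl_trans[OF xy] unfolding gcomp_def by simp
  next
    fix z assume "z \<in> gcomp x"
    hence "z \<in> SD" "(x, z) \<in> E\<^sup>*" unfolding gcomp_def by simp_all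
    thus "z \<in> gcomp y" using rtrancl_trans[OF yx] unfolding gcomp_def by simp
  qed
qed

lemma gcomp_adj: "y \<in> gcomp x \<Longrightarrow> adj y z \<Longrightarrow> z \<in> gcomp x"
proof -
  assume y: "y \<in> gcomp x" and a: "adj y z"
  hence "(x, y) \<in> E\<^sup>*" unfolding gcomp_def by simp
  moreover have "(y, z) \<in> E" using a by simp
  ultimately have "(x, z) \<in> E\<^sup>*" by (rule rtrancl_into_rtrancl)
  moreover have "z \<in> SD" using adjS[OF a] by simp
  ultimately show ?thesis unfolding gcomp_def by simp
qed

lemma Pg_abs: "(x, y) \<in> E\<^sup>* \<Longrightarrow> Pg f \<Longrightarrow> \<bar>f y\<bar> = \<bar>f x\<bar>"
proof (induct rule: rtrancl_induct)
  case (step y z)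
  have a: "adj y z" using step(2) by simp
  have "f y = - gs y z * f z" using step(4) a unfolding Pg_def by blast
  hence "\<bar>f y\<bar> = \<bar>gs y z\<bar> * \<bar>f z\<bar>" by (simp add: abs_mult)
  moreover have "\<bar>gs y z\<bar> = 1" by (rule gs_abs)
  ultimately have "\<bar>f z\<bar> = \<bar>f y\<bar>" by simp
  also have "\<dots> = \<bar>f x\<bar>" using step(3)[OF step(4)] .
  finally show ?case .
qed simp

definition antib where "antib C \<theta> \<longleftrightarrow> (\<forall>x\<in>C. \<theta> x = 1 \<or> \<theta> x = -1) \<and>
          (\<forall>x\<in>C. \<forall>y\<in>C. adj x y \<longrightarrow> \<theta> x * gs x y * \<theta> y = -1)"

lemma antibalanced_iff: "antibalanced \<Sigma> d ori C \<longleftrightarrow> (\<exists>\<theta>. antib C \<theta>)"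
  unfolding antibalanced_def antib_def ..

lemma antib_step: "antib C \<theta> \<Longrightarrow> x \<in> C \<Longrightarrow> y \<in> C \<Longrightarrow> adj x y \<Longrightarrow> \<theta> x = - gs x y * \<theta> y"
proof -
  assume a: "antib C \<theta>" "x \<in> C" "y \<in> C" "adj x y"
  hence e: "\<theta> x * gs x y * \<theta> y = -1" and ty: "\<theta> y * \<theta> y = 1" unfolding antib_def by auto
  have "\<theta> x = \<theta> x * (gs x y * gs x y) * (\<theta> y * \<theta> y)" by (simp add: gs_sq ty)
  also have "\<dots> = (\<theta> x * gs x y * \<theta> y) * gs x y * \<theta> y" by (simp add: mult_ac)
  finally show ?thesis using e by simp
qed

lemma Pg_theta: "Pg f \<Longrightarrow> antib (gcomp x) \<theta> \<Longrightarrow> x \<in> SD \<Longrightarrow> y \<in> gcomp x \<Longrightarrow> f y * \<theta> y = f x * \<theta> x"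
proof -
  assume p: "Pg f" and a: "antib (gcomp x) \<theta>" and x: "x \<in> SD" and y: "y \<in> gcomp x"
  have "(x, y) \<in> E\<^sup>*" using y unfolding gcomp_def by auto
  thus ?thesis
  proof (induct rule: rtrancl_induct)
    case (step y z)
    have yc: "y \<in> gcomp x" using step(1) x rtr_S unfolding gcomp_def by auto
    have adjyz: "adj y z" using step(2) by auto
    have zc: "z \<in> gcomp x" using gcomp_adj[OF yc adjyz] .
    have "f y = - gs y z * f z" using p adjyz unfolding Pg_def by blast
    moreover have "\<theta> y = - gs y z * \<theta> z" using antib_step[OF a yc zc adjyz] .
    ultimately have "f y * \<theta> y = (gs y z * gs y z) * (f z * \<theta> z)" by (simp add: mult_ac)
    thus ?case using step(3) by (simp add: gs_sq)
  qed simp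
qed

lemma Pg_nonzero_antib: "Pg f \<Longrightarrow> x \<in> SD \<Longrightarrow> f x \<noteq> 0 \<Longrightarrow> antib (gcomp x) (\<lambda>y. if f y > 0 then 1 else -1)"
proof -
  assume p: "Pg f" and x: "x \<in> SD" and fx: "f x \<noteq> 0"
  let ?\<theta> = "\<lambda>y. if f y > 0 then (1::real) else -1"
  have ab: "\<bar>f y\<bar> = \<bar>f x\<bar>" if "y \<in> gcomp x" for y
  proof -
    have "(x,y) \<in> E\<^sup>*" using that unfolding gcomp_def by auto
    thus ?thesis by (rule Pg_abs[OF _ p])
  qed
  have nz: "f y \<noteq> 0" if "y \<in> gcomp x" for y
    using ab[OF that] fx by auto
  show ?thesis unfolding antib_def
  proof (intro conjI ballI impI)
    fix y z assume y: "y \<in> gcomp x" and z: "z \<in> gcomp x" and a: "adj y z"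
    have e: "f y = - gs y z * f z" using p a unfolding Pg_def by blast
    have ay: "\<bar>f y\<bar> = \<bar>f x\<bar>" "\<bar>f z\<bar> = \<bar>f x\<bar>"
      using ab[OF y] ab[OF z] by auto
    have ty: "f y = ?\<theta> y * \<bar>f x\<bar>" using ay(1) nz[OF y] by auto
    have tz: "f z = ?\<theta> z * \<bar>f x\<bar>" using ay(2) nz[OF z] by auto
    have eq1: "?\<theta> y * \<bar>f x\<bar> = (- gs y z * ?\<theta> z) * \<bar>f x\<bar>"
    proof -
      have "?\<theta> y * \<bar>f x\<bar> = f y" using ty by simp
      also have "\<dots> = - gs y z * f z" by (rule e)
      also have "\<dots> = (- gs y z * ?\<theta> z) * \<bar>f x\<bar>" by (subst tz) (simp only: mult.assoc)
      finally show ?thesis .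
    qed
    have c: "\<bar>f x\<bar> \<noteq> 0" using fx by simp
    have t: "?\<theta> y = - gs y z * ?\<theta> z" using mult_right_cancel[OF c] eq1 by blast
    have tt: "?\<theta> z * ?\<theta> z = 1" by simp
    have "?\<theta> y * gs y z * ?\<theta> z = - (gs y z * gs y z) * (?\<theta> z * ?\<theta> z)" unfolding t by (simp add: mult_ac)
    thus "?\<theta> y * gs y z * ?\<theta> z = -1" unfolding tt gs_sq by simp
  qed auto
qed

lemma antib_Pg:
  assumes a: "antib (gcomp x) \<theta>" and x: "x \<in> SD"
  shows "Pg (\<lambda>y. if y \<in> gcomp x then \<theta> y else 0)"
  unfolding Pg_def
proof (intro allI impI)
  fix y z assume yz: "adj y z"
  show "(if y \<in> gcomp x then \<theta> y else 0) = - gs y z * (if z \<in> gcomp x then \<theta> z else 0)"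
  proof (cases "y \<in> gcomp x")
    case True
    hence "z \<in> gcomp x" using gcomp_adj yz by blast
    with True show ?thesis using antib_step[OF a True _ yz] by simp
  next
    case False
    have "z \<notin> gcomp x"
    proof
      assume "z \<in> gcomp x"
      hence "y \<in> gcomp x" using gcomp_adj adj_sym[OF yz] by blast
      with False show False by simp
    qed
    with False show ?thesis by simp
  qed
qed

end

context
  fixes \<Sigma> :: "'a::linorder set set" and d :: nat and ori :: "'a set \<Rightarrow> real"
  assumes SC: "simplicial_complex \<Sigma>" and OR: "orientation ori"
    and DP: "\<forall>\<tau>\<in>simplices \<Sigma> d. deg \<Sigma> d \<tau> > 0"
begin

abbreviation "SS \<equiv> simplices \<Sigma> d"
abbreviation "TT \<equiv> simplices \<Sigma> (Suc d)"
abbreviation "X \<equiv> xs \<Sigma> d"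
abbreviation "n \<equiv> length (xs \<Sigma> d)"
abbreviation "L \<equiv> up_laplacian \<Sigma> d ori"
abbreviation "incc \<equiv> incidence \<Sigma> d ori"

lemmas xsD = xs[OF SC OR DP]
lemmas xs_def' = xs_def[OF SC OR DP]
lemmas GD = G_def[OF SC OR DP]
lemmas KfD = Kf_def[OF SC OR DP]

definition ix where "ix \<tau> = the_inv_into {..<n} ((!) X) \<tau>"

lemma bijX: "bij_betw ((!) X) {..<n} SS"
proof -
  have "inj_on ((!) X) {..<n}" using xsD(1) by (simp add: inj_on_def nth_eq_iff_index_eq)
  moreover have "(!) X ` {..<n} = set X" by (auto simp: set_conv_nth)
  hence "(!) X ` {..<n} = SS" using xsD(2) by simp
  ultimately show ?thesis unfolding bij_betw_def by simp
qed

lemma ix1: "\<tau> \<in> SS \<Longrightarrow> ix \<tau> < n \<and> X ! ix \<tau> = \<tau>"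
proof -
  assume t: "\<tau> \<in> SS"
  have b2: "bij_betw (the_inv_into {..<n} ((!) X)) SS {..<n}" by (rule bij_betw_the_inv_into[OF bijX])
  have "ix \<tau> \<in> {..<n}" unfolding ix_def using bij_betwE[OF b2] t by blast
  moreover have "X ! ix \<tau> = \<tau>" unfolding ix_def
    by (rule f_the_inv_into_f) (use bijX t in \<open>auto simp: bij_betw_def\<close>)
  ultimately show ?thesis by simp
qed

lemma ix2: "i < n \<Longrightarrow> ix (X ! i) = i"
  unfolding ix_def using bijX by (simp add: bij_betw_def the_inv_into_f_f)

lemma XS: "i < n \<Longrightarrow> X ! i \<in> SS"
proof -
  assume "i < n"
  hence "X ! i \<in> set X" by (rule nth_mem)
  thus ?thesis unfolding xsD(2) .
qed

lemma sum_reindex: "(\<Sum>j<n. g (X ! j)) = (\<Sum>\<tau>\<in>SS. g \<tau>)"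
  by (rule sum.reindex_bij_betw[OF bijX])

lemma L_carrier: "L \<in> carrier_mat n n"
  unfolding up_laplacian_def Let_def xs_def'[symmetric] by simp

lemma L_entry: "i < n \<Longrightarrow> j < n \<Longrightarrow> L $$ (i,j) = (1 / real (deg \<Sigma> d (X!i))) * (\<Sum>\<sigma>\<in>TT. incc (X!i) \<sigma> * incc (X!j) \<sigma>)"
  unfolding up_laplacian_def Let_def xs_def'[symmetric] by simp

lemma deg_pos: "i < n \<Longrightarrow> real (deg \<Sigma> d (X!i)) > 0"
  using DP XS by auto

lemma L_sym: "i < n \<Longrightarrow> j < n \<Longrightarrow> real (deg \<Sigma> d (X!i)) * L $$ (i,j) = real (deg \<Sigma> d (X!j)) * L $$ (j,i)"
  using deg_pos[of i] deg_pos[of j] by (simp add: L_entry mult.commute)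

lemma order_kernel: "order lam (char_poly L) = kernel_dim (char_matrix L lam)"
  by (rule sym_order_kernel[OF L_carrier deg_pos L_sym])

definition vf where "vf v \<tau> = v $ ix \<tau>"

lemma L_mult: assumes v: "v \<in> carrier_vec n" and i: "i < n"
  shows "(L *\<^sub>v v) $ i = (1 / real (deg \<Sigma> d (X!i))) * (\<Sum>\<sigma>\<in>TT. incc (X!i) \<sigma> * G \<Sigma> d ori (vf v) \<sigma>)"
proof -
  have "(L *\<^sub>v v) $ i = (\<Sum>j<n. L $$ (i,j) * v $ j)" by (rule mv_idx[OF L_carrier v i])
  also have "\<dots> = (\<Sum>j<n. (1 / real (deg \<Sigma> d (X!i))) * (\<Sum>\<sigma>\<in>TT. incc (X!i) \<sigma> * (incc (X!j) \<sigma> * v $ j)))"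
  proof (rule sum.cong[OF refl])
    fix j assume "j \<in> {..<n}"
    hence j: "j < n" by simp
    show "L $$ (i,j) * v $ j = (1 / real (deg \<Sigma> d (X!i))) * (\<Sum>\<sigma>\<in>TT. incc (X!i) \<sigma> * (incc (X!j) \<sigma> * v $ j))"
      unfolding L_entry[OF i j] by (simp only: sum_distrib_right sum_distrib_left mult.assoc)
  qed
  also have "\<dots> = (1 / real (deg \<Sigma> d (X!i))) * (\<Sum>j<n. \<Sum>\<sigma>\<in>TT. incc (X!i) \<sigma> * (incc (X!j) \<sigma> * v $ j))"
    by (simp only: sum_distrib_left)
  also have "\<dots> = (1 / real (deg \<Sigma> d (X!i))) * (\<Sum>\<sigma>\<in>TT. \<Sum>j<n. incc (X!i) \<sigma> * (incc (X!j) \<sigma> * v $ j))"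
    by (subst sum.swap) (rule refl)
  also have "\<dots> = (1 / real (deg \<Sigma> d (X!i))) * (\<Sum>\<sigma>\<in>TT. incc (X!i) \<sigma> * (\<Sum>j<n. incc (X!j) \<sigma> * v $ j))"
    by (simp only: sum_distrib_left)
  also have "\<dots> = (1 / real (deg \<Sigma> d (X!i))) * (\<Sum>\<sigma>\<in>TT. incc (X!i) \<sigma> * G \<Sigma> d ori (vf v) \<sigma>)"
  proof -
    have "(\<Sum>j<n. incc (X!j) \<sigma> * v $ j) = G \<Sigma> d ori (vf v) \<sigma>" for \<sigma>
    proof -
      have "(\<Sum>j<n. incc (X!j) \<sigma> * v $ j) = (\<Sum>j<n. incc (X!j) \<sigma> * vf v (X!j))"
        by (rule sum.cong[OF refl]) (simp only: vf_def ix2 lessThan_iff)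
      also have "\<dots> = G \<Sigma> d ori (vf v) \<sigma>" unfolding GD sum_reindex[of "\<lambda>\<tau>. incc \<tau> \<sigma> * vf v \<tau>"] ..
      finally show ?thesis .
    qed
    thus ?thesis by simp
  qed
  finally show ?thesis .
qed

lemma cm_mult: assumes v: "v \<in> carrier_vec n" and i: "i < n"
  shows "(char_matrix L lam *\<^sub>v v) $ i = (L *\<^sub>v v) $ i - lam * v $ i"
proof -
  have C: "char_matrix L lam \<in> carrier_mat n n" using L_carrier by simp
  have e: "char_matrix L lam $$ (i,j) = L $$ (i,j) - (if i = j then lam else 0)" if "j < n" for j
    using L_carrier i that unfolding char_matrix_def by auto
  have "(char_matrix L lam *\<^sub>v v) $ i = (\<Sum>j<n. (L $$ (i,j) - (if i = j then lam else 0)) * v $ j)"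
    unfolding mv_idx[OF C v i] by (rule sum.cong[OF refl]) (simp add: e)
  also have "\<dots> = (\<Sum>j<n. L $$ (i,j) * v $ j) - (\<Sum>j<n. (if i = j then lam else 0) * v $ j)"
    by (simp only: left_diff_distrib sum_subtractf)
  also have "(\<Sum>j<n. (if i = j then lam else 0) * v $ j) = lam * v $ i"
    using i by (simp add: if_distrib[of "\<lambda>x. x * _"] cong: if_cong)
  finally show ?thesis unfolding mv_idx[OF L_carrier v i] .
qed

lemma ker_char: assumes v: "v \<in> carrier_vec n"
  shows "char_matrix L (real d + 2) *\<^sub>v v = 0\<^sub>v n \<longleftrightarrow> Pg \<Sigma> d ori (vf v)"
proof -
  let ?l = "real d + 2"
  have C: "char_matrix L ?l \<in> carrier_mat n n" using L_carrier by simp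
  have "char_matrix L ?l *\<^sub>v v = 0\<^sub>v n \<longleftrightarrow> (\<forall>i<n. (char_matrix L ?l *\<^sub>v v) $ i = 0)"
  proof
    assume z: "char_matrix L ?l *\<^sub>v v = 0\<^sub>v n"
    show "\<forall>i<n. (char_matrix L ?l *\<^sub>v v) $ i = 0"
    proof (intro allI impI)
      fix i assume "i < n" thus "(char_matrix L ?l *\<^sub>v v) $ i = 0" unfolding z by simp
    qed
  next
    assume "\<forall>i<n. (char_matrix L ?l *\<^sub>v v) $ i = 0"
    thus "char_matrix L ?l *\<^sub>v v = 0\<^sub>v n" using C by (intro eq_vecI) auto
  qed
  also have "\<dots> \<longleftrightarrow> (\<forall>i<n. (\<Sum>\<sigma>\<in>TT. incc (X!i) \<sigma> * G \<Sigma> d ori (vf v) \<sigma>) = ?l * real (deg \<Sigma> d (X!i)) * vf v (X!i))"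
  proof (intro all_cong imp_cong refl)
    fix i assume i: "i < n"
    have dp: "real (deg \<Sigma> d (X!i)) \<noteq> 0" using deg_pos[OF i] by simp
    have vi: "vf v (X!i) = v $ i" unfolding vf_def ix2[OF i] ..
    show "(char_matrix L ?l *\<^sub>v v) $ i = 0 \<longleftrightarrow> (\<Sum>\<sigma>\<in>TT. incc (X!i) \<sigma> * G \<Sigma> d ori (vf v) \<sigma>) = ?l * real (deg \<Sigma> d (X!i)) * vf v (X!i)"
      unfolding cm_mult[OF v i] L_mult[OF v i] vi using dp by (auto simp: field_simps)
  qed
  also have "\<dots> \<longleftrightarrow> Kf \<Sigma> d ori (vf v)"
    unfolding KfD
  proof
    assume a: "\<forall>i<n. (\<Sum>\<sigma>\<in>TT. incc (X!i) \<sigma> * G \<Sigma> d ori (vf v) \<sigma>) = ?l * real (deg \<Sigma> d (X!i)) * vf v (X!i)"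
    show "\<forall>\<tau>\<in>SS. (\<Sum>\<sigma>\<in>TT. incc \<tau> \<sigma> * G \<Sigma> d ori (vf v) \<sigma>) = ?l * real (deg \<Sigma> d \<tau>) * vf v \<tau>"
    proof
      fix \<tau> assume "\<tau> \<in> SS"
      from ix1[OF this] a show "(\<Sum>\<sigma>\<in>TT. incc \<tau> \<sigma> * G \<Sigma> d ori (vf v) \<sigma>) = ?l * real (deg \<Sigma> d \<tau>) * vf v \<tau>"
        by metis
    qed
  next
    assume a: "\<forall>\<tau>\<in>SS. (\<Sum>\<sigma>\<in>TT. incc \<tau> \<sigma> * G \<Sigma> d ori (vf v) \<sigma>) = ?l * real (deg \<Sigma> d \<tau>) * vf v \<tau>"
    show "\<forall>i<n. (\<Sum>\<sigma>\<in>TT. incc (X!i) \<sigma> * G \<Sigma> d ori (vf v) \<sigma>) = ?l * real (deg \<Sigma> d (X!i)) * vf v (X!i)"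
      using a XS by blast
  qed
  also have "\<dots> \<longleftrightarrow> cons \<Sigma> d ori (vf v)"
    using Kf_cons[OF SC OR DP] cons_Kf[OF SC OR DP] by blast
  also have "\<dots> \<longleftrightarrow> Pg \<Sigma> d ori (vf v)" by (rule cons_Pg[OF SC OR DP])
  finally show ?thesis .
qed

end

context
  fixes \<Sigma> :: "'a::linorder set set" and d :: nat and ori :: "'a set \<Rightarrow> real"
  assumes SC: "simplicial_complex \<Sigma>" and OR: "orientation ori"
    and DP: "\<forall>\<tau>\<in>simplices \<Sigma> d. deg \<Sigma> d \<tau> > 0"
begin

abbreviation "S8 \<equiv> simplices \<Sigma> d"
abbreviation "X8 \<equiv> xs \<Sigma> d"
abbreviation "n8 \<equiv> length (xs \<Sigma> d)"
abbreviation "L8 \<equiv> up_laplacian \<Sigma> d ori"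
abbreviation "cp \<equiv> gcomp \<Sigma> d"
abbreviation "PG \<equiv> Pg \<Sigma> d ori"
abbreviation "AN \<equiv> antib \<Sigma> d ori"
abbreviation "vf8 \<equiv> vf \<Sigma> d"
abbreviation "CM \<equiv> char_matrix L8 (real d + 2)"

lemmas antibD = antib_def[OF SC OR DP]
lemmas PgD = Pg_def[OF SC OR DP]
lemmas compsD = gcomps_eq[OF SC OR DP]
lemmas cselfD = gcomp_self[OF SC OR DP]
lemmas ceqD = gcomp_eq[OF SC OR DP]
lemmas abiffD = antibalanced_iff[OF SC OR DP]
lemmas PgthD = Pg_theta[OF SC OR DP]
lemmas PgnzD = Pg_nonzero_antib[OF SC OR DP]
lemmas abPgD = antib_Pg[OF SC OR DP]
lemmas kercD = ker_char[OF SC OR DP]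
lemmas ix1D = ix1[OF SC OR DP]
lemmas ix2D = ix2[OF SC OR DP]
lemmas XSD = XS[OF SC OR DP]
lemmas vfD = vf_def[OF SC OR DP]
lemmas LcD = L_carrier[OF SC OR DP]

definition "AB = {C \<in> gamma_components \<Sigma> d. antibalanced \<Sigma> d ori C}"
definition "th C = (SOME \<theta>. AN C \<theta>)"
definition "ev C = vec n8 (\<lambda>i. if X8 ! i \<in> C then th C (X8 ! i) else 0)"

lemma compS: "x \<in> S8 \<Longrightarrow> cp x \<subseteq> S8"
  unfolding gcomp_def[OF SC OR DP] by auto

lemma AB_D: "C \<in> AB \<Longrightarrow> \<exists>x\<in>S8. C = cp x \<and> AN C (th C)"
proof -
  assume "C \<in> AB"
  hence c: "C \<in> cp ` S8" and a: "antibalanced \<Sigma> d ori C" unfolding AB_def compsD by auto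
  from a have "\<exists>\<theta>. AN C \<theta>" unfolding abiffD .
  hence "AN C (th C)" unfolding th_def by (rule someI_ex)
  with c show ?thesis by blast
qed

lemma finite_AB: "finite AB"
proof -
  have "finite (cp ` S8)" by (rule finite_imageI[OF finS[OF SC OR DP]])
  moreover have "AB \<subseteq> cp ` S8" unfolding AB_def compsD by blast
  ultimately show ?thesis by (rule finite_subset[rotated])
qed

lemma th_pm: "C \<in> AB \<Longrightarrow> x \<in> C \<Longrightarrow> th C x = 1 \<or> th C x = -1"
  using AB_D unfolding antibD by blast

lemma ev_carrier: "ev C \<in> carrier_vec n8"
  unfolding ev_def by simp

lemma ev_idx: "i < n8 \<Longrightarrow> ev C $ i = (if X8 ! i \<in> C then th C (X8 ! i) else 0)"
  unfolding ev_def by simp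

lemma vf_ev: "\<tau> \<in> S8 \<Longrightarrow> vf8 (ev C) \<tau> = (if \<tau> \<in> C then th C \<tau> else 0)"
  unfolding vfD using ix1D[of \<tau>] ev_idx by simp

lemma Pg_cong: "(\<And>\<tau>. \<tau> \<in> S8 \<Longrightarrow> f \<tau> = g \<tau>) \<Longrightarrow> PG f \<Longrightarrow> PG g"
  unfolding PgD using adjS[OF SC OR DP] by metis

lemma ev_ker: "C \<in> AB \<Longrightarrow> ev C \<in> mat_kernel CM"
proof -
  assume C: "C \<in> AB"
  then obtain x where x: "x \<in> S8" and Cx: "C = cp x" and a: "AN C (th C)" using AB_D by blast
  have "PG (\<lambda>y. if y \<in> cp x then th C y else 0)" using abPgD[OF _ x] a Cx by simp
  hence "PG (vf8 (ev C))" by (rule Pg_cong[rotated]) (simp add: vf_ev Cx)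
  hence "CM *\<^sub>v ev C = 0\<^sub>v n8" using kercD[OF ev_carrier] by simp
  moreover have "CM \<in> carrier_mat n8 n8" using LcD by simp
  ultimately show ?thesis using ev_carrier by (intro mat_kernelI) auto
qed

lemma in_comp: "C \<in> AB \<Longrightarrow> \<tau> \<in> C \<Longrightarrow> C = cp \<tau>"
  using AB_D ceqD by metis

lemma ev_nz: "C \<in> AB \<Longrightarrow> i < n8 \<Longrightarrow> X8 ! i \<in> C \<Longrightarrow> ev C $ i \<noteq> 0"
  using th_pm[of C "X8 ! i"] ev_idx[of i C] by auto

lemma ev_z: "i < n8 \<Longrightarrow> X8 ! i \<notin> C \<Longrightarrow> ev C $ i = 0"
  using ev_idx[of i C] by auto

lemma ev_inj: "inj_on ev AB"
proof (rule inj_onI)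
  fix C C' assume C: "C \<in> AB" and C': "C' \<in> AB" and e: "ev C = ev C'"
  obtain x where x: "x \<in> S8" and Cx: "C = cp x" using AB_D[OF C] by blast
  have xC: "x \<in> C" using cselfD[OF x] Cx by simp
  have i: "ix \<Sigma> d x < n8" "X8 ! ix \<Sigma> d x = x" using ix1D[OF x] by auto
  have "ev C' $ ix \<Sigma> d x \<noteq> 0" using ev_nz[OF C i(1)] i(2) xC e by simp
  hence "x \<in> C'" using ev_z[OF i(1)] i(2) by metis
  hence "C' = cp x" by (rule in_comp[OF C'])
  with Cx show "C = C'" by simp
qed

lemma ev_other: "C \<in> AB \<Longrightarrow> C' \<in> AB \<Longrightarrow> i < n8 \<Longrightarrow> X8 ! i \<in> C \<Longrightarrow> C' \<noteq> C \<Longrightarrow> ev C' $ i = 0"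
proof -
  assume C: "C \<in> AB" and C': "C' \<in> AB" and i: "i < n8" and xi: "X8 ! i \<in> C" and ne: "C' \<noteq> C"
  show ?thesis
  proof (rule ev_z[OF i], rule notI)
    assume "X8 ! i \<in> C'"
    hence "C' = cp (X8 ! i)" by (rule in_comp[OF C'])
    moreover have "C = cp (X8 ! i)" by (rule in_comp[OF C xi])
    ultimately show False using ne by simp
  qed
qed

definition "coef u w = u $ (SOME j. j < n8 \<and> w $ j \<noteq> 0) * w $ (SOME j. j < n8 \<and> w $ j \<noteq> 0)"

lemma vf_X: "i < n8 \<Longrightarrow> vf8 u (X8 ! i) = u $ i"
  unfolding vfD using ix2D[of i] by simp

lemma coef_ev:
  assumes C: "C \<in> AB" and pg: "PG (vf8 u)" and i: "i < n8" and xi: "X8 ! i \<in> C"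
  shows "coef u (ev C) = u $ i * th C (X8 ! i)"
proof -
  let ?j = "SOME j. j < n8 \<and> ev C $ j \<noteq> 0"
  have ex: "\<exists>j. j < n8 \<and> ev C $ j \<noteq> 0" using ev_nz[OF C i xi] i by blast
  have j: "?j < n8" "ev C $ ?j \<noteq> 0" using someI_ex[OF ex] by auto
  have xj: "X8 ! ?j \<in> C"
  proof (rule ccontr)
    assume "X8 ! ?j \<notin> C"
    hence "ev C $ ?j = 0" by (rule ev_z[OF j(1)])
    with j(2) show False by simp
  qed
  have evj: "ev C $ ?j = th C (X8 ! ?j)" using ev_idx[OF j(1)] xj by simp
  have Ci: "C = cp (X8 ! i)" by (rule in_comp[OF C xi])
  have an: "AN (cp (X8 ! i)) (th C)" using AB_D[OF C] Ci by auto
  have "vf8 u (X8 ! ?j) * th C (X8 ! ?j) = vf8 u (X8 ! i) * th C (X8 ! i)"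
    by (rule PgthD[OF pg an XSD[OF i]]) (use xj Ci in simp)
  hence "u $ ?j * th C (X8 ! ?j) = u $ i * th C (X8 ! i)" unfolding vf_X[OF j(1)] vf_X[OF i] .
  thus ?thesis unfolding coef_def evj .
qed

lemma kdim: "kernel_dim CM = card AB"
proof -
  have Cc: "CM \<in> carrier_mat n8 n8" using LcD by simp
  interpret K: kernel n8 n8 CM by (unfold_locales) (rule Cc)
  define B where "B = ev ` AB"
  have finB: "finite B" using finite_AB B_def by simp
  have BK: "B \<subseteq> mat_kernel CM" using ev_ker B_def by auto
  have Bc: "B \<subseteq> carrier_vec n8" using ev_carrier B_def by auto
  have indep: "\<not> K.NC.lin_dep B"
  proof
    assume "K.NC.lin_dep B"
    then obtain U a v where fin: "finite U" and UB: "U \<subseteq> B" and lc: "K.NC.lincomb a U = 0\<^sub>v n8"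
      and vU: "v \<in> U" and av: "a v \<noteq> 0"
      unfolding K.NC.lin_dep_def by auto
    from vU UB obtain C where C: "C \<in> AB" and vC: "v = ev C" unfolding B_def by auto
    obtain x where x: "x \<in> S8" and Cx: "C = cp x" using AB_D[OF C] by blast
    have xC: "x \<in> C" using cselfD[OF x] Cx by simp
    define i where "i = ix \<Sigma> d x"
    have i: "i < n8" "X8 ! i = x" using ix1D[OF x] i_def by auto
    have Uc: "U \<subseteq> carrier_vec n8" using UB Bc by auto
    have "0 = K.NC.lincomb a U $ i" unfolding lc using i by simp
    also have "\<dots> = (\<Sum>w\<in>U. a w * w $ i)" by (rule vec_space.lincomb_index[OF i(1) Uc])
    also have "\<dots> = a v * v $ i + (\<Sum>w\<in>U - {v}. a w * w $ i)" by (rule sum.remove[OF fin vU])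
    also have "(\<Sum>w\<in>U - {v}. a w * w $ i) = 0"
    proof (rule sum.neutral, rule ballI)
      fix w assume w: "w \<in> U - {v}"
      then obtain C' where C': "C' \<in> AB" and wC: "w = ev C'" using UB unfolding B_def by auto
      have ne: "C' \<noteq> C" using w wC vC by auto
      have "w $ i = 0" unfolding wC using ev_other[OF C C' i(1) _ ne] i xC by simp
      thus "a w * w $ i = 0" by simp
    qed
    finally have "a v * v $ i = 0" by simp
    moreover have "v $ i \<noteq> 0" unfolding vC by (rule ev_nz[OF C i(1)]) (use i xC in simp)
    ultimately show False using av by simp
  qed
  have spanK: "mat_kernel CM \<subseteq> K.NC.span B"
  proof
    fix u assume u: "u \<in> mat_kernel CM"
    have uc: "u \<in> carrier_vec n8" using u Cc by (auto simp: mat_kernel_def)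
    have pg: "PG (vf8 u)" using kercD[OF uc] u Cc by (auto simp: mat_kernel_def)
    have "K.NC.lincomb (coef u) B = u"
    proof (rule eq_vecI)
      show "dim_vec (K.NC.lincomb (coef u) B) = dim_vec u"
        using K.NC.lincomb_closed[OF Bc] uc by (simp add: module_vec_simps)
      fix i assume "i < dim_vec u"
      hence i: "i < n8" using uc by simp
      let ?\<tau> = "X8 ! i"
      have \<tau>: "?\<tau> \<in> S8" by (rule XSD[OF i])
      have "K.NC.lincomb (coef u) B $ i = (\<Sum>w\<in>B. coef u w * w $ i)"
        by (rule vec_space.lincomb_index[OF i Bc])
      also have "\<dots> = u $ i"
      proof (cases "cp ?\<tau> \<in> AB")
        case True
        let ?v = "ev (cp ?\<tau>)"
        have vB: "?v \<in> B" using True B_def by auto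
        have tin: "?\<tau> \<in> cp ?\<tau>" by (rule cselfD[OF \<tau>])
        have "(\<Sum>w\<in>B. coef u w * w $ i) = coef u ?v * ?v $ i + (\<Sum>w\<in>B - {?v}. coef u w * w $ i)"
          by (rule sum.remove[OF finB vB])
        also have "(\<Sum>w\<in>B - {?v}. coef u w * w $ i) = 0"
        proof (rule sum.neutral, rule ballI)
          fix w assume w: "w \<in> B - {?v}"
          then obtain C' where C': "C' \<in> AB" and wC: "w = ev C'" unfolding B_def by auto
          have "C' \<noteq> cp ?\<tau>" using w wC by auto
          hence "w $ i = 0" unfolding wC by (rule ev_other[OF True C' i tin])
          thus "coef u w * w $ i = 0" by simp
        qed
        also have "coef u ?v = u $ i * th (cp ?\<tau>) ?\<tau>" by (rule coef_ev[OF True pg i tin])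
        also have "?v $ i = th (cp ?\<tau>) ?\<tau>" using ev_idx[OF i] tin by simp
        finally show ?thesis using th_pm[OF True tin] by auto
      next
        case False
        have "(\<Sum>w\<in>B. coef u w * w $ i) = 0"
        proof (rule sum.neutral, rule ballI)
          fix w assume "w \<in> B"
          then obtain C' where C': "C' \<in> AB" and wC: "w = ev C'" unfolding B_def by auto
          have "?\<tau> \<notin> C'"
          proof
            assume "?\<tau> \<in> C'"
            hence "C' = cp ?\<tau>" by (rule in_comp[OF C'])
            with C' False show False by simp
          qed
          hence "w $ i = 0" unfolding wC by (rule ev_z[OF i])
          thus "coef u w * w $ i = 0" by simp
        qed
        moreover have "u $ i = 0"
        proof (rule ccontr)
          assume "u $ i \<noteq> 0"
          hence "vf8 u ?\<tau> \<noteq> 0" using vf_X[OF i, of u] by simp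
          from PgnzD[OF pg \<tau> this] have "\<exists>\<theta>. AN (cp ?\<tau>) \<theta>" by blast
          hence "antibalanced \<Sigma> d ori (cp ?\<tau>)" unfolding abiffD .
          moreover have "cp ?\<tau> \<in> gamma_components \<Sigma> d" unfolding compsD using \<tau> by simp
          ultimately have "cp ?\<tau> \<in> AB" unfolding AB_def by simp
          with False show False by simp
        qed
        ultimately show ?thesis by simp
      qed
      finally show "K.NC.lincomb (coef u) B $ i = u $ i" .
    qed
    moreover have "K.NC.lincomb (coef u) B \<in> K.NC.span B"
    proof -
      have "K.NC.span B = {w. \<exists>a. w = K.NC.lincomb a B}"
        by (rule K.NC.finite_span[OF finB Bc])
      thus ?thesis by blast
    qed
    ultimately show "u \<in> K.NC.span B" by simp
  qed
  have "K.span B = mat_kernel CM"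
  proof
    show "K.span B \<subseteq> mat_kernel CM" using K.Ker.span_is_subset2[OF BK] by simp
    show "mat_kernel CM \<subseteq> K.span B" using spanK K.span_same[OF BK] by simp
  qed
  hence basis: "K.basis B"
    unfolding K.Ker.basis_def using indep K.lindep_same[OF BK] BK by simp
  have "kernel_dim CM = K.dim" by simp
  also have "\<dots> = card B" by (rule K.Ker.dim_basis[OF finB basis])
  also have "\<dots> = card AB" unfolding B_def by (rule card_image[OF ev_inj])
  finally show ?thesis .
qed

end
theorem mainTheorem3:
  fixes \<Sigma> :: "'a::linorder set set" and d :: nat and ori :: "'a set \<Rightarrow> real"
  assumes "simplicial_complex \<Sigma>"
    and "orientation ori"
    and "\<forall>\<tau>\<in>simplices \<Sigma> d. deg \<Sigma> d \<tau> > 0"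
  shows "(eigenvalue (up_laplacian \<Sigma> d ori) (real d + 2) \<longleftrightarrow>
           (\<exists>C\<in>gamma_components \<Sigma> d. antibalanced \<Sigma> d ori C)) \<and>
         order (real d + 2) (char_poly (up_laplacian \<Sigma> d ori)) =
           card {C \<in> gamma_components \<Sigma> d. antibalanced \<Sigma> d ori C}"
proof -
  note SC = assms(1) and OR = assms(2) and DP = assms(3)
  let ?L = "up_laplacian \<Sigma> d ori"
  let ?AB = "{C \<in> gamma_components \<Sigma> d. antibalanced \<Sigma> d ori C}"
  have ord: "order (real d + 2) (char_poly ?L) = card ?AB"
    using order_kernel[OF SC OR DP] kdim[OF SC OR DP] AB_def[OF SC OR DP] by simp
  have Lc: "?L \<in> carrier_mat (length (xs \<Sigma> d)) (length (xs \<Sigma> d))" by (rule L_carrier[OF SC OR DP])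
  have cp0: "char_poly ?L \<noteq> 0" using degree_monic_char_poly[OF Lc] by auto
  have finAB: "finite ?AB" using finite_AB[OF SC OR DP] AB_def[OF SC OR DP] by simp
  have "eigenvalue ?L (real d + 2) \<longleftrightarrow> poly (char_poly ?L) (real d + 2) = 0"
    by (rule eigenvalue_root_char_poly[OF Lc])
  also have "\<dots> \<longleftrightarrow> order (real d + 2) (char_poly ?L) \<noteq> 0" using order_root cp0 by blast
  also have "\<dots> \<longleftrightarrow> ?AB \<noteq> {}" unfolding ord using finAB by simp
  also have "\<dots> \<longleftrightarrow> (\<exists>C\<in>gamma_components \<Sigma> d. antibalanced \<Sigma> d ori C)" by blast
  finally show ?thesis using ord by simp
qed

end
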